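(* Let $S$ be a stochastic operator and let $(V_1,\varphi_1)$ and $(V_2,\varphi_2)$ be two pairs, each consisting of a measurable weight $V_i:\Omega\to[1,\infty)$ and an admissible rate function $\varphi_i$, such that $\varphi_2(V_2)\ge V_1$ on $\Omega$. Assume that for each $i\in\{1,2\}$, $S$ is a stochastic operator on $\mathcal M_{V_i}$ and: (1) there exist $K_i>0$, $0<\varsigma_i<1$ with $\|S\mu\|_{V_i}+\varsigma_i\|\mu\|_{\varphi_i(V_i)}\le\|\mu\|_{V_i}+K_i\|\mu\|$ for all $\mu\in\mathcal M_{V_i}$; (2) for some integer $N_i\ge1$ there exist $0<\gamma_{H,i}<1$ and $A_i>K_i/\varsigma_i$ such that for every $\nu\in\mathcal N_{\varphi_i(V_i)}$ with $\|\nu\|_{\varphi_i(V_i)}\le A_i\|\nu\|$ one has $\|S^{N_i}\nu\|\le\gamma_{H,i}\|\nu\|$. Then $S$ has at most one equilibrium in $\mathcal P_{\varphi_2(V_2)}$.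
   Context: Let $(\Omega,\mathcal E)$ be a measurable space. $\mathcal M$ denotes the space of finite signed measures on $\Omega$, $\mathcal P\subset\mathcal M$ the set of probability measures, and $\mathcal N=\{\nu\in\mathcal M:\nu(\Omega)=0\}$. For $\mu\in\mathcal M$ with Hahn–Jordan decomposition $\mu=\mu_+-\mu_-$, $|\mu|=\mu_++\mu_-$ and $\|\mu\|=\int_\Omega d|\mu|$ is the total variation norm. For a measurable $W:\Omega\to[1,\infty)$, $\|\mu\|_W=\int_\Omega W\,d|\mu|$, $\mathcal M_W=\{\mu\in\mathcal M:\|\mu\|_W<\infty\}$, $\mathcal P_W=\mathcal P\cap\mathcal M_W$, $\mathcal N_W=\mathcal N\cap\mathcal M_W$. A stochastic operator is a linear map $S:\mathcal M\to\mathcal M$ with $S(\mathcal P)\subseteq\mathcal P$; it is a stochastic operator on $\mathcal M_W$ if moreover $S(\mathcal M_W)\subseteq\mathcal M_W$ and the restriction is bounded for $\|\cdot\|_W$. An admissible rate function is a concave function $\varphi:[1,\infty)\to[1,\infty)$ with $\varphi(1)=1$ and $\varphi(v)/v\to0$ as $v\to\infty$; $\varphi(V)$ denotes the composition $\varphi\circ V$. An equilibrium of $S$ is a $\mu\in\mathcal P$ with $S\mu=\mu$. *)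

theory Defs
  imports "HOL-Analysis.Analysis"
begin

definition fsm :: "'a measure \<Rightarrow> ('a set \<Rightarrow> real) set" where
  "fsm M = {\<mu>. \<mu> {} = 0 \<and> (\<forall>A. A \<notin> sets M \<longrightarrow> \<mu> A = 0) \<and>
     (\<forall>A::nat \<Rightarrow> 'a set. range A \<subseteq> sets M \<longrightarrow> disjoint_family A \<longrightarrow>
        (\<lambda>n. \<mu> (A n)) sums \<mu> (\<Union>(range A)))}"

definition prob_meas :: "'a measure \<Rightarrow> ('a set \<Rightarrow> real) set" where
  "prob_meas M = {\<mu>\<in>fsm M. (\<forall>A\<in>sets M. 0 \<le> \<mu> A) \<and> \<mu> (space M) = 1}"

definition pos_part :: "'a measure \<Rightarrow> ('a set \<Rightarrow> real) \<Rightarrow> 'a set \<Rightarrow> real" where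
  "pos_part M \<mu> A = (SUP B\<in>{B\<in>sets M. B \<subseteq> A}. \<mu> B)"

definition neg_part :: "'a measure \<Rightarrow> ('a set \<Rightarrow> real) \<Rightarrow> 'a set \<Rightarrow> real" where
  "neg_part M \<mu> A = pos_part M (\<lambda>B. - \<mu> B) A"

definition abs_meas :: "'a measure \<Rightarrow> ('a set \<Rightarrow> real) \<Rightarrow> 'a measure" where
  "abs_meas M \<mu> = measure_of (space M) (sets M)
      (\<lambda>A. ennreal (pos_part M \<mu> A + neg_part M \<mu> A))"

definition wnorm :: "'a measure \<Rightarrow> ('a \<Rightarrow> real) \<Rightarrow> ('a set \<Rightarrow> real) \<Rightarrow> ennreal" where
  "wnorm M W \<mu> = (\<integral>\<^sup>+ x. ennreal (W x) \<partial>(abs_meas M \<mu>))"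

definition tvnorm :: "'a measure \<Rightarrow> ('a set \<Rightarrow> real) \<Rightarrow> ennreal" where
  "tvnorm M \<mu> = wnorm M (\<lambda>_. 1) \<mu>"

definition meas_W :: "'a measure \<Rightarrow> ('a \<Rightarrow> real) \<Rightarrow> ('a set \<Rightarrow> real) set" where
  "meas_W M W = {\<mu>\<in>fsm M. wnorm M W \<mu> < \<infinity>}"

definition zero_mass :: "'a measure \<Rightarrow> ('a set \<Rightarrow> real) set" where
  "zero_mass M = {\<nu>\<in>fsm M. \<nu> (space M) = 0}"

definition weight :: "'a measure \<Rightarrow> ('a \<Rightarrow> real) \<Rightarrow> bool" where
  "weight M W \<longleftrightarrow> W \<in> borel_measurable M \<and> (\<forall>x\<in>space M. 1 \<le> W x)"

definition stochastic_op ::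
  "'a measure \<Rightarrow> (('a set \<Rightarrow> real) \<Rightarrow> ('a set \<Rightarrow> real)) \<Rightarrow> bool" where
  "stochastic_op M S \<longleftrightarrow>
     (\<forall>\<mu>\<in>fsm M. S \<mu> \<in> fsm M) \<and>
     (\<forall>\<mu>\<in>fsm M. \<forall>\<nu>\<in>fsm M. \<forall>a b::real.
        S (\<lambda>A. a * \<mu> A + b * \<nu> A) = (\<lambda>A. a * S \<mu> A + b * S \<nu> A)) \<and>
     (\<forall>\<mu>\<in>prob_meas M. S \<mu> \<in> prob_meas M)"

definition stochastic_op_on ::
  "'a measure \<Rightarrow> ('a \<Rightarrow> real) \<Rightarrow> (('a set \<Rightarrow> real) \<Rightarrow> ('a set \<Rightarrow> real)) \<Rightarrow> bool" where
  "stochastic_op_on M W S \<longleftrightarrow> stochastic_op M S \<and>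
     (\<forall>\<mu>\<in>meas_W M W. S \<mu> \<in> meas_W M W) \<and>
     (\<exists>C::real. \<forall>\<mu>\<in>meas_W M W. wnorm M W (S \<mu>) \<le> ennreal C * wnorm M W \<mu>)"

definition admissible_rate :: "(real \<Rightarrow> real) \<Rightarrow> bool" where
  "admissible_rate \<phi> \<longleftrightarrow> concave_on {1..} \<phi> \<and> (\<forall>v\<ge>1. 1 \<le> \<phi> v) \<and> \<phi> 1 = 1 \<and>
     ((\<lambda>v. \<phi> v / v) \<longlongrightarrow> 0) at_top"

definition drift_cond :: "'a measure \<Rightarrow> (('a set \<Rightarrow> real) \<Rightarrow> ('a set \<Rightarrow> real)) \<Rightarrow>
    ('a \<Rightarrow> real) \<Rightarrow> (real \<Rightarrow> real) \<Rightarrow> real \<Rightarrow> real \<Rightarrow> bool" where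
  "drift_cond M S V \<phi> K \<sigma> \<longleftrightarrow>
     (\<forall>\<mu>\<in>meas_W M V. wnorm M V (S \<mu>) + ennreal \<sigma> * wnorm M (\<phi> \<circ> V) \<mu>
                       \<le> wnorm M V \<mu> + ennreal K * tvnorm M \<mu>)"

definition contract_cond :: "'a measure \<Rightarrow> (('a set \<Rightarrow> real) \<Rightarrow> ('a set \<Rightarrow> real)) \<Rightarrow>
    ('a \<Rightarrow> real) \<Rightarrow> (real \<Rightarrow> real) \<Rightarrow> nat \<Rightarrow> real \<Rightarrow> real \<Rightarrow> bool" where
  "contract_cond M S V \<phi> N \<gamma> A \<longleftrightarrow>
     (\<forall>\<nu>\<in>zero_mass M \<inter> meas_W M (\<phi> \<circ> V).
        wnorm M (\<phi> \<circ> V) \<nu> \<le> ennreal A * tvnorm M \<nu> \<longrightarrow>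
        tvnorm M ((S ^^ N) \<nu>) \<le> ennreal \<gamma> * tvnorm M \<nu>)"

end

theory Submission
  imports Defs
begin


definition mk :: "'a measure \<Rightarrow> ('a set \<Rightarrow> real) \<Rightarrow> 'a measure" where
  "mk M \<rho> = measure_of (space M) (sets M) (\<lambda>A. ennreal (\<rho> A))"

lemma mk_sets[simp]: "sets (mk M \<rho>) = sets M"
  unfolding mk_def by (simp add: sets.sets_measure_of_eq)

lemma mk_space[simp]: "space (mk M \<rho>) = space M"
  unfolding mk_def by (simp add: sets.space_measure_of_eq)

lemma mk_emeasure:
  assumes "\<rho> \<in> fsm M" "\<forall>A\<in>sets M. 0 \<le> \<rho> A" "A \<in> sets M"
  shows "emeasure (mk M \<rho>) A = ennreal (\<rho> A)"
  unfolding mk_def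
proof (rule emeasure_measure_of_sigma)
  show "sigma_algebra (space M) (sets M)" by (rule sets.sigma_algebra_axioms)
  show "positive (sets M) (\<lambda>A. ennreal (\<rho> A))"
    using assms(1) by (simp add: positive_def fsm_def)
  show "countably_additive (sets M) (\<lambda>A. ennreal (\<rho> A))"
    unfolding countably_additive_def
  proof (intro allI impI)
    fix F :: "nat \<Rightarrow> 'a set" assume F: "range F \<subseteq> sets M" "disjoint_family F" "\<Union> (range F) \<in> sets M"
    have s: "(\<lambda>n. \<rho> (F n)) sums \<rho> (\<Union>(range F))" using assms(1) F unfolding fsm_def by blast
    have nn: "\<And>i. 0 \<le> \<rho> (F i)" using F assms(2) by auto
    have "(\<Sum>i. ennreal (\<rho> (F i))) = ennreal (\<Sum>i. \<rho> (F i))"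
      by (rule suminf_ennreal2[OF nn]) (use s in \<open>simp add: sums_iff\<close>)
    also have "\<dots> = ennreal (\<rho> (\<Union>(range F)))" using s by (simp add: sums_iff)
    finally show "(\<Sum>i. ennreal (\<rho> (F i))) = ennreal (\<rho> (\<Union>(range F)))" .
  qed
qed fact

lemma mk_finite:
  assumes "\<rho> \<in> fsm M" "\<forall>A\<in>sets M. 0 \<le> \<rho> A"
  shows "finite_measure (mk M \<rho>)"
  by (rule finite_measureI) (simp add: mk_emeasure[OF assms sets.top])

lemma density_rep:
  assumes "finite_measure L" "finite_measure N" "sets N = sets L" "absolutely_continuous L N"
  obtains f where "f \<in> borel_measurable L" "\<And>x. 0 \<le> f x" "density L (\<lambda>x. ennreal (f x)) = N"
proof -
  interpret L: finite_measure L by fact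
  obtain D where D: "D \<in> borel_measurable L" "AE x in L. RN_deriv L N x = ennreal (D x)" "\<And>x. 0 \<le> D x"
    using L.real_RN_deriv[OF assms(2,4,3)] by metis
  have "density L (\<lambda>x. ennreal (D x)) = density L (RN_deriv L N)"
    using D by (intro density_cong) auto
  also have "\<dots> = N" using L.density_RN_deriv[OF assms(4,3)] .
  finally show ?thesis using D that by blast
qed



lemma pos_part_rep:
  fixes L M :: "'a measure" and f g :: "'a \<Rightarrow> real"
  assumes sL: "sets L = sets M"
    and fm: "f \<in> borel_measurable L" and gm: "g \<in> borel_measurable L"
    and fi: "integrable L f" and gi: "integrable L g"
    and rm: "\<forall>B\<in>sets M. \<mu> B = (\<integral>x. f x * indicator B x \<partial>L)"
    and rn: "\<forall>B\<in>sets M. \<nu> B = (\<integral>x. g x * indicator B x \<partial>L)"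
    and A: "A \<in> sets M"
  shows "pos_part M (\<lambda>B. \<mu> B - \<nu> B) A = (\<integral>x. max 0 (f x - g x) * indicator A x \<partial>L)"
proof -
  let ?v = "(\<integral>x. max 0 (f x - g x) * indicator A x \<partial>L)"
  have iB: "integrable L (\<lambda>x. (f x - g x) * indicator B x)" if "B \<in> sets M" for B
    using that sL fi gi by (intro integrable_real_mult_indicator) auto
  have iA: "integrable L (\<lambda>x. max 0 (f x - g x) * indicator A x)"
    using A sL fi gi by (intro integrable_real_mult_indicator integrable_max) auto
  have dB: "\<mu> B - \<nu> B = (\<integral>x. (f x - g x) * indicator B x \<partial>L)" if "B \<in> sets M" for B
  proof -
    have "(\<integral>x. (f x - g x) * indicator B x \<partial>L) = (\<integral>x. f x * indicator B x - g x * indicator B x \<partial>L)"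
      by (simp add: left_diff_distrib)
    also have "\<dots> = (\<integral>x. f x * indicator B x \<partial>L) - (\<integral>x. g x * indicator B x \<partial>L)"
      using that sL fi gi by (intro Bochner_Integration.integral_diff integrable_real_mult_indicator) auto
    finally show ?thesis using rm rn that by simp
  qed
  define B0 where "B0 = A \<inter> {x\<in>space L. 0 < f x - g x}"
  have "{x\<in>space L. 0 < f x - g x} \<in> sets L" using fm gm by measurable
  then have B0: "B0 \<in> sets M" unfolding B0_def using A sL by auto
  show ?thesis unfolding pos_part_def
  proof (rule cSup_eq_maximum)
    show "?v \<in> (\<lambda>B. \<mu> B - \<nu> B) ` {B \<in> sets M. B \<subseteq> A}"
    proof
      show "B0 \<in> {B \<in> sets M. B \<subseteq> A}" using B0 by (auto simp: B0_def)
      have "(\<integral>x. (f x - g x) * indicator B0 x \<partial>L) = ?v"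
        by (rule Bochner_Integration.integral_cong) (auto simp: B0_def split: split_indicator)
      then show "?v = \<mu> B0 - \<nu> B0" using dB[OF B0] by simp
    qed
    fix y assume "y \<in> (\<lambda>B. \<mu> B - \<nu> B) ` {B \<in> sets M. B \<subseteq> A}"
    then obtain B where B: "B \<in> sets M" "B \<subseteq> A" "y = \<mu> B - \<nu> B" by auto
    have "(\<integral>x. (f x - g x) * indicator B x \<partial>L) \<le> ?v"
      using B by (intro integral_mono iB iA) (auto split: split_indicator)
    then show "y \<le> ?v" using dB B by simp
  qed
qed



lemma abs_space[simp]: "space (abs_meas M \<mu>) = space M"
  unfolding abs_meas_def by (simp add: sets.space_measure_of_eq)

lemma abs_rep:
  fixes L M :: "'a measure" and f g :: "'a \<Rightarrow> real"
  assumes sL: "sets L = sets M"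
    and fm: "f \<in> borel_measurable L" and gm: "g \<in> borel_measurable L"
    and fi: "integrable L f" and gi: "integrable L g"
    and rm: "\<forall>B\<in>sets M. \<mu> B = (\<integral>x. f x * indicator B x \<partial>L)"
    and rn: "\<forall>B\<in>sets M. \<nu> B = (\<integral>x. g x * indicator B x \<partial>L)"
  shows "abs_meas M (\<lambda>B. \<mu> B - \<nu> B) = density L (\<lambda>x. ennreal \<bar>f x - g x\<bar>)"
proof -
  let ?D = "density L (\<lambda>x. ennreal \<bar>f x - g x\<bar>)"
  have spL: "space L = space M" using sL by (rule sets_eq_imp_space_eq)
  have "?D = measure_of (space M) (sets M) (emeasure ?D)"
    using measure_of_of_measure[of ?D] spL sL by simp
  also have "\<dots> = abs_meas M (\<lambda>B. \<mu> B - \<nu> B)"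
    unfolding abs_meas_def
  proof (rule measure_of_eq)
    show "sets M \<subseteq> Pow (space M)" by (rule sets.space_closed)
    fix A assume "A \<in> sigma_sets (space M) (sets M)"
    then have A: "A \<in> sets M" by (simp add: sets.sigma_sets_eq)
    have p: "pos_part M (\<lambda>B. \<mu> B - \<nu> B) A = (\<integral>x. max 0 (f x - g x) * indicator A x \<partial>L)"
      by (rule pos_part_rep[OF sL fm gm fi gi rm rn A])
    have "neg_part M (\<lambda>B. \<mu> B - \<nu> B) A = pos_part M (\<lambda>B. \<nu> B - \<mu> B) A"
      unfolding neg_part_def by simp
    also have "\<dots> = (\<integral>x. max 0 (g x - f x) * indicator A x \<partial>L)"
      by (rule pos_part_rep[OF sL gm fm gi fi rn rm A])
    finally have n: "neg_part M (\<lambda>B. \<mu> B - \<nu> B) A = (\<integral>x. max 0 (g x - f x) * indicator A x \<partial>L)" .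
    have i1: "integrable L (\<lambda>x. max 0 (f x - g x) * indicator A x)"
      using A sL fi gi by (intro integrable_real_mult_indicator integrable_max) auto
    have i2: "integrable L (\<lambda>x. max 0 (g x - f x) * indicator A x)"
      using A sL fi gi by (intro integrable_real_mult_indicator integrable_max) auto
    have i3: "integrable L (\<lambda>x. \<bar>f x - g x\<bar> * indicator A x)"
      using A sL fi gi by (intro integrable_real_mult_indicator integrable_abs) auto
    have "pos_part M (\<lambda>B. \<mu> B - \<nu> B) A + neg_part M (\<lambda>B. \<mu> B - \<nu> B) A
        = (\<integral>x. max 0 (f x - g x) * indicator A x + max 0 (g x - f x) * indicator A x \<partial>L)"
      unfolding p n using i1 i2 by (rule Bochner_Integration.integral_add[symmetric])
    also have "\<dots> = (\<integral>x. \<bar>f x - g x\<bar> * indicator A x \<partial>L)"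
      by (rule Bochner_Integration.integral_cong) (auto split: split_indicator)
    finally have e: "pos_part M (\<lambda>B. \<mu> B - \<nu> B) A + neg_part M (\<lambda>B. \<mu> B - \<nu> B) A
        = (\<integral>x. \<bar>f x - g x\<bar> * indicator A x \<partial>L)" .
    have "emeasure ?D A = (\<integral>\<^sup>+x. ennreal \<bar>f x - g x\<bar> * indicator A x \<partial>L)"
      using A sL fm gm by (subst emeasure_density) auto
    also have "\<dots> = (\<integral>\<^sup>+x. ennreal (\<bar>f x - g x\<bar> * indicator A x) \<partial>L)"
      by (intro nn_integral_cong) (auto split: split_indicator)
    also have "\<dots> = ennreal (\<integral>x. \<bar>f x - g x\<bar> * indicator A x \<partial>L)"
      using i3 by (intro nn_integral_eq_integral) auto
    finally show "emeasure ?D A = ennreal (pos_part M (\<lambda>B. \<mu> B - \<nu> B) A + neg_part M (\<lambda>B. \<mu> B - \<nu> B) A)"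
      using e by simp
  qed
  finally show ?thesis by simp
qed

lemma rep:
  assumes L: "finite_measure L" and sL: "sets L = sets M"
    and fm: "f \<in> borel_measurable L" and f0: "\<And>x. 0 \<le> f x"
    and dens: "density L (\<lambda>x. ennreal (f x)) = mk M \<mu>"
    and mu: "\<mu> \<in> fsm M" "\<forall>A\<in>sets M. 0 \<le> \<mu> A"
  shows "integrable L f" "\<forall>B\<in>sets M. \<mu> B = (\<integral>x. f x * indicator B x \<partial>L)"
proof -
  have spL: "space L = space M" using sL by (rule sets_eq_imp_space_eq)
  have key: "integrable L (\<lambda>x. f x * indicator B x) \<and> (\<integral>x. f x * indicator B x \<partial>L) = \<mu> B"
    if B: "B \<in> sets M" for B
  proof -
    have "(\<integral>\<^sup>+x. ennreal (f x * indicator B x) \<partial>L) = (\<integral>\<^sup>+x. ennreal (f x) * indicator B x \<partial>L)"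
      by (intro nn_integral_cong) (auto split: split_indicator)
    also have "\<dots> = emeasure (density L (\<lambda>x. ennreal (f x))) B"
      using B sL fm by (subst emeasure_density) auto
    also have "\<dots> = ennreal (\<mu> B)" using dens mk_emeasure[OF mu B] by simp
    finally show ?thesis
      using B sL fm f0 mu(2) by (subst nn_integral_eq_integrable[symmetric]) auto
  qed
  then show "\<forall>B\<in>sets M. \<mu> B = (\<integral>x. f x * indicator B x \<partial>L)" by auto
  have "integrable L (\<lambda>x. f x * indicator (space M) x)" using key[OF sets.top] by simp
  then show "integrable L f"
    by (rule Bochner_Integration.integrable_cong[THEN iffD1, rotated -1]) (auto simp: spL)
qed



lemma fsm_add: "\<mu> \<in> fsm M \<Longrightarrow> \<nu> \<in> fsm M \<Longrightarrow> (\<lambda>A. \<mu> A + \<nu> A) \<in> fsm M"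
  unfolding fsm_def by (auto intro: sums_add)

lemma fsm_diff: "\<mu> \<in> fsm M \<Longrightarrow> \<nu> \<in> fsm M \<Longrightarrow> (\<lambda>A. \<mu> A - \<nu> A) \<in> fsm M"
  unfolding fsm_def by (auto intro: sums_diff)

lemma core:
  assumes S: "stochastic_op M S" and W: "weight M V1"
    and K1: "0 < K1" and s1: "0 < \<sigma>1" and dr: "drift_cond M S V1 \<phi>1 K1 \<sigma>1"
    and g1: "0 < \<gamma>1" "\<gamma>1 < 1" and A1: "K1 / \<sigma>1 < A1"
    and ct: "contract_cond M S V1 \<phi>1 N1 \<gamma>1 A1"
    and mu: "\<mu> \<in> prob_meas M" and nu: "\<nu> \<in> prob_meas M"
    and wmu: "wnorm M V1 \<mu> < \<infinity>" and wnu: "wnorm M V1 \<nu> < \<infinity>"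
    and Smu: "S \<mu> = \<mu>" and Snu: "S \<nu> = \<nu>"
  shows "\<mu> = \<nu>"
proof -
  have mf: "\<mu> \<in> fsm M" "\<forall>A\<in>sets M. 0 \<le> \<mu> A" "\<mu> (space M) = 1" using mu by (auto simp: prob_meas_def)
  have nf: "\<nu> \<in> fsm M" "\<forall>A\<in>sets M. 0 \<le> \<nu> A" "\<nu> (space M) = 1" using nu by (auto simp: prob_meas_def)
  define \<rho> where "\<rho> = (\<lambda>A. \<mu> A + \<nu> A)"
  have rf: "\<rho> \<in> fsm M" "\<forall>A\<in>sets M. 0 \<le> \<rho> A" using mf nf fsm_add by (auto simp: \<rho>_def)
  define L where "L = mk M \<rho>"
  have L: "finite_measure L" "sets L = sets M" using mk_finite[OF rf] by (auto simp: L_def)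
  have spL: "space L = space M" using L(2) by (rule sets_eq_imp_space_eq)
  have ac: "absolutely_continuous L (mk M \<alpha>)"
    if a: "\<alpha> \<in> fsm M" "\<forall>A\<in>sets M. 0 \<le> \<alpha> A" "\<forall>A\<in>sets M. \<alpha> A \<le> \<rho> A" for \<alpha>
    unfolding absolutely_continuous_def
  proof
    fix A assume "A \<in> null_sets L"
    then have A0: "A \<in> sets M" "emeasure L A = 0" using L(2) by (auto simp: null_sets_def)
    then have A: "A \<in> sets M" "ennreal (\<rho> A) = 0" using mk_emeasure[OF rf A0(1)] by (auto simp: L_def)
    then have "\<rho> A \<le> 0" by (simp add: ennreal_eq_0_iff)
    then have "\<alpha> A = 0" using a A by (meson antisym order.trans)
    then show "A \<in> null_sets (mk M \<alpha>)" using mk_emeasure[OF a(1,2) A(1)] A by (simp add: null_sets_def)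
  qed
  obtain f where f: "f \<in> borel_measurable L" "\<And>x. 0 \<le> f x" "density L (\<lambda>x. ennreal (f x)) = mk M \<mu>"
  proof -
    have le: "\<forall>A\<in>sets M. \<mu> A \<le> \<rho> A" using nf(2) by (simp add: \<rho>_def)
    have se: "sets (mk M \<mu>) = sets L" using L(2) by simp
    show ?thesis using density_rep[OF L(1) mk_finite[OF mf(1,2)] se ac[OF mf(1,2) le]] that by blast
  qed
  obtain g where g: "g \<in> borel_measurable L" "\<And>x. 0 \<le> g x" "density L (\<lambda>x. ennreal (g x)) = mk M \<nu>"
  proof -
    have le: "\<forall>A\<in>sets M. \<nu> A \<le> \<rho> A" using mf(2) by (simp add: \<rho>_def)
    have se: "sets (mk M \<nu>) = sets L" using L(2) by simp
    show ?thesis using density_rep[OF L(1) mk_finite[OF nf(1,2)] se ac[OF nf(1,2) le]] that by blast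
  qed
  note fr = rep[OF L f(1,2,3) mf(1,2)]
  note gr = rep[OF L g(1,2,3) nf(1,2)]
  have zr: "\<forall>B\<in>sets M. (0::real) = (\<integral>x. 0 * indicator B x \<partial>L)" by simp
  have absmu: "abs_meas M \<mu> = density L (\<lambda>x. ennreal (f x))"
    using abs_rep[OF L(2) f(1) _ fr(1) _ fr(2) zr] f(2) by simp
  have absnu: "abs_meas M \<nu> = density L (\<lambda>x. ennreal (g x))"
    using abs_rep[OF L(2) g(1) _ gr(1) _ gr(2) zr] g(2) by simp
  define d where "d = (\<lambda>A. \<mu> A - \<nu> A)"
  have absd: "abs_meas M d = density L (\<lambda>x. ennreal \<bar>f x - g x\<bar>)"
    unfolding d_def by (rule abs_rep[OF L(2) f(1) g(1) fr(1) gr(1) fr(2) gr(2)])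
  have V1b: "V1 \<in> borel_measurable L"
    using W unfolding weight_def measurable_cong_sets[OF L(2) refl] by blast
  have V1m: "(\<lambda>x. ennreal (V1 x)) \<in> borel_measurable L"
    using V1b by measurable
  have V1ge: "\<And>x. x \<in> space M \<Longrightarrow> 1 \<le> V1 x" using W by (auto simp: weight_def)
  have wd_int: "wnorm M V1 d = (\<integral>\<^sup>+x. ennreal \<bar>f x - g x\<bar> * ennreal (V1 x) \<partial>L)"
    unfolding wnorm_def absd using f(1) g(1) V1m by (subst nn_integral_density) auto
  have wmu_int: "wnorm M V1 \<mu> = (\<integral>\<^sup>+x. ennreal (f x) * ennreal (V1 x) \<partial>L)"
    unfolding wnorm_def absmu using f(1) V1m by (subst nn_integral_density) auto
  have wnu_int: "wnorm M V1 \<nu> = (\<integral>\<^sup>+x. ennreal (g x) * ennreal (V1 x) \<partial>L)"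
    unfolding wnorm_def absnu using g(1) V1m by (subst nn_integral_density) auto
  have "wnorm M V1 d \<le> (\<integral>\<^sup>+x. ennreal (f x) * ennreal (V1 x) + ennreal (g x) * ennreal (V1 x) \<partial>L)"
    unfolding wd_int
  proof (rule nn_integral_mono)
    fix x assume "x \<in> space L"
    then have "0 \<le> V1 x" using V1ge spL by force
    then have "\<bar>f x - g x\<bar> * V1 x \<le> f x * V1 x + g x * V1 x"
      using f(2)[of x] g(2)[of x] by (simp add: mult_right_mono flip: distrib_right)
    then show "ennreal \<bar>f x - g x\<bar> * ennreal (V1 x) \<le> ennreal (f x) * ennreal (V1 x) + ennreal (g x) * ennreal (V1 x)"
      using \<open>0 \<le> V1 x\<close> f(2)[of x] g(2)[of x]
      by (simp add: ennreal_mult'[symmetric] ennreal_plus[symmetric] del: ennreal_plus)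
  qed
  also have "\<dots> = wnorm M V1 \<mu> + wnorm M V1 \<nu>"
    unfolding wmu_int wnu_int using f(1) g(1) V1m by (intro nn_integral_add) auto
  finally have wd: "wnorm M V1 d < \<infinity>" using wmu wnu
    by (metis ennreal_add_eq_top infinity_ennreal_def le_less_trans top.not_eq_extremum)
  have dfsm: "d \<in> fsm M" unfolding d_def by (rule fsm_diff[OF mf(1) nf(1)])
  have tv_le: "tvnorm M d \<le> wnorm M V1 d"
    unfolding tvnorm_def wnorm_def by (intro nn_integral_mono) (auto intro: V1ge)
  have Sd: "S d = d"
  proof -
    have "S (\<lambda>A. 1 * \<mu> A + (-1) * \<nu> A) = (\<lambda>A. 1 * S \<mu> A + (-1) * S \<nu> A)"
      using S mf nf unfolding stochastic_op_def by blast
    then show ?thesis using Smu Snu by (simp add: d_def)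
  qed
  have SNd: "(S ^^ n) d = d" for n by (induction n) (simp_all add: Sd)
  define t where "t = tvnorm M d"
  define w where "w = wnorm M (\<phi>1 \<circ> V1) d"
  have "wnorm M V1 (S d) + ennreal \<sigma>1 * w \<le> wnorm M V1 d + ennreal K1 * t"
    using dr dfsm wd unfolding drift_cond_def meas_W_def w_def t_def by blast
  then have sw: "ennreal \<sigma>1 * w \<le> ennreal K1 * t"
    using wd Sd by (auto simp add: ennreal_add_left_cancel_le)
  have "t < \<infinity>" using tv_le wd t_def by (metis le_less_trans)
  then obtain t' where t': "0 \<le> t'" "t = ennreal t'" using less_top_ennreal by (metis infinity_ennreal_def)
  have "w \<noteq> \<infinity>"
  proof
    assume "w = \<infinity>"
    then have "ennreal \<sigma>1 * w = \<infinity>" using s1 by (simp add: ennreal_mult_eq_top_iff)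
    moreover have "ennreal K1 * t = ennreal (K1 * t')" using K1 t' by (simp add: ennreal_mult)
    ultimately show False using sw by (metis ennreal_neq_top infinity_ennreal_def top.extremum_unique)
  qed
  then obtain w' where w': "0 \<le> w'" "w = ennreal w'" using less_top_ennreal by (metis infinity_ennreal_def top.not_eq_extremum)
  have "\<sigma>1 * w' \<le> K1 * t'" using sw t' w' s1 K1
    by (simp add: ennreal_mult[symmetric] ennreal_le_iff)
  then have "w' \<le> (K1 / \<sigma>1) * t'" using s1 by (simp add: field_simps)
  also have "\<dots> \<le> A1 * t'" using A1 t'(1) by (intro mult_right_mono) auto
  finally have "w' \<le> A1 * t'" .
  then have wA: "wnorm M (\<phi>1 \<circ> V1) d \<le> ennreal A1 * tvnorm M d"
    using w' t' unfolding w_def[symmetric] t_def[symmetric]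
    by (metis ennreal_leI ennreal_mult'' t'(1))
  have dz: "d \<in> zero_mass M" using dfsm mf nf by (simp add: zero_mass_def d_def)
  have dW: "d \<in> meas_W M (\<phi>1 \<circ> V1)" using dfsm \<open>w \<noteq> \<infinity>\<close> by (simp add: meas_W_def w_def top.not_eq_extremum)
  have "tvnorm M ((S ^^ N1) d) \<le> ennreal \<gamma>1 * tvnorm M d"
    using ct dz dW wA unfolding contract_cond_def by blast
  then have "ennreal t' \<le> ennreal (\<gamma>1 * t')" using t' g1 SNd
    by (simp add: t_def ennreal_mult)
  then have "t' \<le> \<gamma>1 * t'" using g1 t' by (simp add: ennreal_le_iff)
  then have "t' = 0" using g1 t' by (metis antisym mult_le_cancel_right1 not_le)
  then have "(\<integral>\<^sup>+x. ennreal \<bar>f x - g x\<bar> \<partial>L) = 0"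
    using t' unfolding t_def tvnorm_def wnorm_def absd using f(1) g(1)
    by (subst (asm) nn_integral_density) auto
  then have ae: "AE x in L. ennreal \<bar>f x - g x\<bar> = 0"
    using f(1) g(1) by (subst (asm) nn_integral_0_iff_AE) auto
  show ?thesis
  proof
    fix B
    show "\<mu> B = \<nu> B"
    proof (cases "B \<in> sets M")
      case True
      have "\<mu> B - \<nu> B = (\<integral>x. f x * indicator B x - g x * indicator B x \<partial>L)"
        using fr(2) gr(2) True L(2) fr(1) gr(1)
        by (subst Bochner_Integration.integral_diff) (auto intro: integrable_real_mult_indicator)
      also have "\<dots> = 0"
        by (rule integral_eq_zero_AE) (use ae in \<open>auto split: split_indicator\<close>)
      finally show ?thesis by simp
    next
      case False
      then show ?thesis using mf(1) nf(1) by (simp add: fsm_def)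
    qed
  qed
qed

theorem corollary4p5:
  fixes M :: "'a measure"
    and S :: "('a set \<Rightarrow> real) \<Rightarrow> ('a set \<Rightarrow> real)"
    and V1 V2 :: "'a \<Rightarrow> real" and \<phi>1 \<phi>2 :: "real \<Rightarrow> real"
    and K1 K2 \<sigma>1 \<sigma>2 \<gamma>1 \<gamma>2 A1 A2 :: real and N1 N2 :: nat
  assumes "stochastic_op M S"
    and "weight M V1" and "weight M V2"
    and "admissible_rate \<phi>1" and "admissible_rate \<phi>2"
    and "\<forall>x\<in>space M. V1 x \<le> \<phi>2 (V2 x)"
    and "stochastic_op_on M V1 S" and "stochastic_op_on M V2 S"
    and "0 < K1" and "0 < \<sigma>1" and "\<sigma>1 < 1" and "drift_cond M S V1 \<phi>1 K1 \<sigma>1"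
    and "0 < K2" and "0 < \<sigma>2" and "\<sigma>2 < 1" and "drift_cond M S V2 \<phi>2 K2 \<sigma>2"
    and "1 \<le> N1" and "0 < \<gamma>1" and "\<gamma>1 < 1" and "K1 / \<sigma>1 < A1"
    and "contract_cond M S V1 \<phi>1 N1 \<gamma>1 A1"
    and "1 \<le> N2" and "0 < \<gamma>2" and "\<gamma>2 < 1" and "K2 / \<sigma>2 < A2"
    and "contract_cond M S V2 \<phi>2 N2 \<gamma>2 A2"
  shows "\<forall>\<mu>\<in>prob_meas M \<inter> meas_W M (\<phi>2 \<circ> V2). \<forall>\<nu>\<in>prob_meas M \<inter> meas_W M (\<phi>2 \<circ> V2).
           S \<mu> = \<mu> \<longrightarrow> S \<nu> = \<nu> \<longrightarrow> \<mu> = \<nu>"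
  proof (intro ballI impI)
  fix \<mu> \<nu>
  assume mu: "\<mu> \<in> prob_meas M \<inter> meas_W M (\<phi>2 \<circ> V2)" and nu: "\<nu> \<in> prob_meas M \<inter> meas_W M (\<phi>2 \<circ> V2)"
    and Smu: "S \<mu> = \<mu>" and Snu: "S \<nu> = \<nu>"
  have fin: "wnorm M V1 \<alpha> < \<infinity>" if a: "\<alpha> \<in> meas_W M (\<phi>2 \<circ> V2)" for \<alpha>
  proof -
    have "wnorm M V1 \<alpha> \<le> wnorm M (\<phi>2 \<circ> V2) \<alpha>"
      unfolding wnorm_def using assms(6) by (intro nn_integral_mono) (auto intro: ennreal_leI)
    then show ?thesis using a unfolding meas_W_def by (auto intro: le_less_trans)
  qed
  show "\<mu> = \<nu>"
    by (rule core[OF assms(1,2,9,10,12,18,19,20,21)]) (use mu nu fin Smu Snu in auto)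
qed

end
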